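(* Let $p=N=5$, and let $r_R=\operatorname{rank}Q_R$ for the maps $Q_R:\Lambda^R\to\Lambda^{R+5}$ defined below, whose values for $0\le R\le 9$ are \[ (r_0,\dots,r_9)=(1,\,25,\,300,\,2300,\,12650,\,53129,\,177075,\,480400,\,1045525,\,1723450). \] Consider the degree-20 rank polynomial $\mathcal R_{5,5}(x)=\sum_{R=0}^{20}r_Rx^R$, which is palindromic ($r_{20-R}=r_R$). These ten ranks, palindromicity, and the single condition $(1+x)\mid\mathcal R_{5,5}(x)$ determine the middle coefficient $r_{10}$ uniquely (namely $r_{10}=2{,}047{,}506$). For the resulting polynomial, $(1+x)^4\mid\mathcal R_{5,5}(x)$ while $(1+x)^5\nmid\mathcal R_{5,5}(x)$.
   Context: $\Lambda=\Lambda^\bullet(\mathbb{C}^{5\times5})$ is the exterior algebra on the $25$ odd generators $\Psi_{ij}$, $1\le i,j\le5$, and $Q_R$ is left wedge multiplication by $\mathrm{Tr}(\Psi^5)=\sum_{i_1,\dots,i_5}\Psi_{i_1i_2}\Psi_{i_2i_3}\Psi_{i_3i_4}\Psi_{i_4i_5}\Psi_{i_5i_1}$ restricted to $\Lambda^R$. Divisibility is in $\mathbb{Q}[x]$. *)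

theory Defs
  imports "HOL-Computational_Algebra.Polynomial"
begin

definition rank_poly :: "(nat \<Rightarrow> nat) \<Rightarrow> rat poly" where
  "rank_poly r = (\<Sum>R\<le>20. monom (of_nat (r R)) R)"

end

theory Submission
  imports Defs
begin

lemma coeff_rp: "coeff (rank_poly r) n = (if n \<le> 20 then of_nat (r n) else 0)"
  unfolding rank_poly_def by (simp add: coeff_sum)

lemma poly_rp: "poly (rank_poly r) x = (\<Sum>R\<le>20. of_nat (r R) * x ^ R)"
  unfolding rank_poly_def by (simp add: poly_sum poly_monom)

definition Q5 :: "rat poly" where "Q5 = Poly [1, 21, 210, 1330, 5985, 20348, 54243, 116070, 168410, 116070, 54243, 20348, 5985, 1330, 210, 21, 1]"

lemma Qm1: "poly Q5 (-1) \<noteq> 0" unfolding Q5_def by simp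

lemma Q4: "[:1,1:]^4 * Q5 = Poly [1,25,300,2300,12650,53129,177075,480400,1045525,1723450,2047506,1723450,1045525,480400,177075,53129,12650,2300,300,25,1]"
  unfolding Q5_def by (simp add: numeral_eq_Suc)

lemma atm20: "{..20::nat} = {0,1,2,3,4,5,6,7,8,9,10,11,12,13,14,15,16,17,18,19,20}"
  by (auto; presburger)

theorem mainTheorem6:
  fixes r :: "nat \<Rightarrow> nat"
  assumes "r 0 = 1" and "r 1 = 25" and "r 2 = 300" and "r 3 = 2300"
    and "r 4 = 12650" and "r 5 = 53129" and "r 6 = 177075" and "r 7 = 480400"
    and "r 8 = 1045525" and "r 9 = 1723450"
    and palin: "\<forall>R\<le>20. r (20 - R) = r R"
  shows "([:1, 1:] dvd rank_poly r \<longleftrightarrow> r 10 = 2047506)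
    \<and> (r 10 = 2047506 \<longrightarrow>
         [:1, 1:] ^ 4 dvd rank_poly r \<and> \<not> [:1, 1:] ^ 5 dvd rank_poly r)"
proof -
  have p: "r (20 - R) = r R" if "R \<le> 20" for R using palin that by blast
  have r11: "r 11 = 1723450" using p[of 9] assms by simp
  have r12: "r 12 = 1045525" using p[of 8] assms by simp
  have r13: "r 13 = 480400" using p[of 7] assms by simp
  have r14: "r 14 = 177075" using p[of 6] assms by simp
  have r15: "r 15 = 53129" using p[of 5] assms by simp
  have r16: "r 16 = 12650" using p[of 4] assms by simp
  have r17: "r 17 = 2300" using p[of 3] assms by simp
  have r18: "r 18 = 300" using p[of 2] assms by simp
  have "r (20 - 1) = r 1" using p[of 1] by simp
  moreover have "(20::nat) - 1 = 19" by simp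
  ultimately have r19: "r 19 = 25" using assms(2) by metis
  have r20: "r 20 = 1" using p[of 0] assms by simp
  have r1': "r (Suc 0) = 25" using assms(2) by simp
  note rs = r1' assms(1-10) r11 r12 r13 r14 r15 r16 r17 r18 r19 r20
  have pv: "poly (rank_poly r) (-1) = of_nat (r 10) - 2047506"
    by (simp add: poly_rp atm20 rs)
  have d1: "[:1, 1:] dvd rank_poly r \<longleftrightarrow> r 10 = 2047506"
  proof -
    have "[:1, 1:] dvd rank_poly r \<longleftrightarrow> poly (rank_poly r) (-1) = 0"
      using poly_eq_0_iff_dvd[of "rank_poly r" "-1"] by simp
    also have "\<dots> \<longleftrightarrow> r 10 = 2047506" unfolding pv by simp
    finally show ?thesis .
  qed
  moreover have "[:1, 1:] ^ 4 dvd rank_poly r \<and> \<not> [:1, 1:] ^ 5 dvd rank_poly r"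
    if h: "r 10 = 2047506"
  proof -
    have eq: "rank_poly r = [:1,1:]^4 * Q5"
    proof (rule poly_eqI)
      fix n
      show "coeff (rank_poly r) n = coeff ([:1,1:]^4 * Q5) n"
        unfolding Q4 coeff_rp coeff_Poly_eq
        apply (cases "n \<le> 20")
        subgoal
        proof -
          assume "n \<le> 20"
          then have "n \<in> {..20}" by simp
          then show ?thesis unfolding atm20 using rs h by (auto simp: nth_default_def)
        qed
        subgoal by (simp add: nth_default_def)
        done
    qed
    have "\<not> [:1, 1:] ^ 5 dvd rank_poly r"
    proof
      assume "[:1, 1:] ^ 5 dvd rank_poly r"
      moreover have n5: "(5::nat) = Suc 4" by simp
      have "[:1,1:]^5 = [:1,1:]^4 * ([:1,1:]::rat poly)" unfolding n5 by (rule power_Suc2)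
      ultimately have "[:1,1:]^4 * [:1,1:] dvd [:1,1:]^4 * Q5" unfolding eq by simp
      moreover have nz: "([:1,1:]::rat poly)^4 \<noteq> 0" by (rule power_not_zero) simp
      ultimately have "[:1,1:] dvd Q5" using dvd_mult_cancel_left by blast
      then have "poly Q5 (-1) = 0" using poly_eq_0_iff_dvd[of Q5 "-1"] by simp
      with Qm1 show False by simp
    qed
    then show ?thesis unfolding eq by simp
  qed
  ultimately show ?thesis by blast
qed

end
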